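(* Let $n\ge 2$ and $m\ge1$ be integers, and let $t,s,r\in\mathbb{Z}_n$ with $t,r$ units of $\mathbb{Z}_n$ and $s^2=(1-tr)s$ in $\mathbb{Z}_n$. Let $X=(\mathbb{Z}_n)^m$ and $B(x,y)=(ty+sx,\,rx)$. Then the birack rank of $(X,B)$ is the smallest integer $N>0$ such that $(tr+s)^N=1$ in $\mathbb{Z}_n$.
   Context: Let $X$ be a set. A map $B:X\times X\to X\times X$, written $B=(B_1,B_2)$, is strongly invertible if: (i) $B$ is a bijection; (ii) there is a unique invertible map $S:X\times X\to X\times X$ (the sideways map) with $S(B_1(x,y),x)=(B_2(x,y),y)$ for all $x,y$; (iii) writing $S=(S_1,S_2)$, $S^{-1}=(S^{-1}_1,S^{-1}_2)$ and $\Delta(x)=(x,x)$, each of $S_1\circ\Delta$, $S_2\circ\Delta$, $S^{-1}_1\circ\Delta$, $S^{-1}_2\circ\Delta$ is a bijection $X\to X$. A birack is a pair $(X,B)$ with $B$ strongly invertible satisfying the set-theoretic Yang–Baxter equation $(B\times\mathrm{Id})(\mathrm{Id}\times B)(B\times\mathrm{Id})=(\mathrm{Id}\times B)(B\times\mathrm{Id})(\mathrm{Id}\times B)$. Its kink map is $\pi=S^{-1}_1\circ\Delta\circ(S^{-1}_2\circ\Delta)^{-1}$. The birack rank is the smallest positive integer $N$ with $\pi^N(x)=x$ for all $x\in X$. *)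

theory Defs
  imports "HOL-Number_Theory.Cong"
begin

definition is_sideways :: "'a set \<Rightarrow> ('a \<times> 'a \<Rightarrow> 'a \<times> 'a) \<Rightarrow> ('a \<times> 'a \<Rightarrow> 'a \<times> 'a) \<Rightarrow> bool" where
  "is_sideways X B S \<longleftrightarrow> bij_betw S (X \<times> X) (X \<times> X) \<and>
     (\<forall>x\<in>X. \<forall>y\<in>X. S (fst (B (x, y)), x) = (snd (B (x, y)), y))"

definition sideways_map :: "'a set \<Rightarrow> ('a \<times> 'a \<Rightarrow> 'a \<times> 'a) \<Rightarrow> ('a \<times> 'a \<Rightarrow> 'a \<times> 'a)" where
  "sideways_map X B = (SOME S. is_sideways X B S)"

definition sideways_inv :: "'a set \<Rightarrow> ('a \<times> 'a \<Rightarrow> 'a \<times> 'a) \<Rightarrow> ('a \<times> 'a \<Rightarrow> 'a \<times> 'a)" where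
  "sideways_inv X B = the_inv_into (X \<times> X) (sideways_map X B)"

definition strongly_invertible :: "'a set \<Rightarrow> ('a \<times> 'a \<Rightarrow> 'a \<times> 'a) \<Rightarrow> bool" where
  "strongly_invertible X B \<longleftrightarrow>
     bij_betw B (X \<times> X) (X \<times> X) \<and>
     (\<exists>S. is_sideways X B S \<and> (\<forall>S'. is_sideways X B S' \<longrightarrow> (\<forall>p\<in>X \<times> X. S' p = S p))) \<and>
     bij_betw (\<lambda>x. fst (sideways_map X B (x, x))) X X \<and>
     bij_betw (\<lambda>x. snd (sideways_map X B (x, x))) X X \<and>
     bij_betw (\<lambda>x. fst (sideways_inv X B (x, x))) X X \<and>
     bij_betw (\<lambda>x. snd (sideways_inv X B (x, x))) X X"

definition B_Id :: "('a \<times> 'a \<Rightarrow> 'a \<times> 'a) \<Rightarrow> 'a \<times> 'a \<times> 'a \<Rightarrow> 'a \<times> 'a \<times> 'a" where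
  "B_Id B p = (case p of (x, y, z) \<Rightarrow> (fst (B (x, y)), snd (B (x, y)), z))"

definition Id_B :: "('a \<times> 'a \<Rightarrow> 'a \<times> 'a) \<Rightarrow> 'a \<times> 'a \<times> 'a \<Rightarrow> 'a \<times> 'a \<times> 'a" where
  "Id_B B p = (case p of (x, y, z) \<Rightarrow> (x, fst (B (y, z)), snd (B (y, z))))"

definition birack :: "'a set \<Rightarrow> ('a \<times> 'a \<Rightarrow> 'a \<times> 'a) \<Rightarrow> bool" where
  "birack X B \<longleftrightarrow> strongly_invertible X B \<and>
     (\<forall>p\<in>X \<times> X \<times> X. B_Id B (Id_B B (B_Id B p)) = Id_B B (B_Id B (Id_B B p)))"

(* kink map  \<pi> = S^{-1}_1 \<circ> \<Delta> \<circ> (S^{-1}_2 \<circ> \<Delta>)^{-1}, inverse taken on X *)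
definition kink_map :: "'a set \<Rightarrow> ('a \<times> 'a \<Rightarrow> 'a \<times> 'a) \<Rightarrow> 'a \<Rightarrow> 'a" where
  "kink_map X B = (\<lambda>x. let y = the_inv_into X (\<lambda>z. snd (sideways_inv X B (z, z))) x
                        in fst (sideways_inv X B (y, y)))"

definition birack_rank :: "'a set \<Rightarrow> ('a \<times> 'a \<Rightarrow> 'a \<times> 'a) \<Rightarrow> nat" where
  "birack_rank X B = (LEAST N. 0 < N \<and> (\<forall>x\<in>X. (kink_map X B ^^ N) x = x))"

(* (Z_n)^m : vectors indexed by i < m with entries in {0..<n} (representatives), zero for i \<ge> m *)
definition zn_vecs :: "int \<Rightarrow> nat \<Rightarrow> (nat \<Rightarrow> int) set" where
  "zn_vecs n m = {v. (\<forall>i<m. v i \<in> {0..<n}) \<and> (\<forall>i\<ge>m. v i = 0)}"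

definition alex_B :: "int \<Rightarrow> int \<Rightarrow> int \<Rightarrow> int \<Rightarrow> (nat \<Rightarrow> int) \<times> (nat \<Rightarrow> int) \<Rightarrow> (nat \<Rightarrow> int) \<times> (nat \<Rightarrow> int)" where
  "alex_B n t s r p = (case p of (x, y) \<Rightarrow>
      ((\<lambda>i. (t * y i + s * x i) mod n), (\<lambda>i. (r * x i) mod n)))"

end

theory Submission
  imports Defs
begin

lemma ms1: "(a * (u mod n) + v) mod n = (a*u+v) mod (n::int)"
  by (metis mod_add_left_eq mod_mult_right_eq)
lemma ms2: "(v + a * (u mod n)) mod n = (v+a*u) mod (n::int)"
  by (metis mod_add_right_eq mod_mult_right_eq)
lemma ms3: "(a * (u mod n) - v) mod n = (a*u-v) mod (n::int)"
  by (metis mod_diff_left_eq mod_mult_right_eq)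
lemma ms4: "(v - a * (u mod n)) mod n = (v-a*u) mod (n::int)"
  by (metis mod_diff_right_eq mod_mult_right_eq)
lemma ms5: "(a * (u mod n - v)) mod n = (a*(u-v)) mod (n::int)"
  by (metis mod_diff_left_eq mod_mult_right_eq)
lemma mcong: "x mod n = y mod n \<Longrightarrow> (a*x) mod n = (a*y) mod (n::int)"
  by (metis mod_mult_right_eq)
lemma ms10': "(v - (u mod n)) mod n = (v-u) mod (n::int)"
  by (rule mod_diff_right_eq)
lemmas ms6 = mcong[OF ms4] and ms7 = mcong[OF ms2] and ms8 = mcong[OF ms1] and ms9 = mcong[OF ms3]
  and ms10 = mcong[OF ms10']
lemmas msimps = ms6 ms7 ms8 ms9 ms10 ms1 ms2 ms3 ms4 ms5 mod_mult_right_eq mod_add_left_eq mod_add_right_eq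
  mod_diff_left_eq mod_diff_right_eq

locale alex =
  fixes n t s r t' r' :: int and m :: nat
  assumes n2: "n \<ge> 2" and m1: "m \<ge> 1"
    and tt: "[t*t' = 1] (mod n)" and rr: "[r*r' = 1] (mod n)"
    and sc: "[s^2 = (1 - t*r)*s] (mod n)"
begin

abbreviation X where "X \<equiv> zn_vecs n m"
abbreviation BB where "BB \<equiv> alex_B n t s r"

definition S0 :: "(nat \<Rightarrow> int) \<times> (nat \<Rightarrow> int) \<Rightarrow> (nat \<Rightarrow> int) \<times> (nat \<Rightarrow> int)" where
  "S0 p = (case p of (a,b) \<Rightarrow> ((\<lambda>i. (r*b i) mod n), (\<lambda>i. (t'*(a i - s*b i)) mod n)))"
definition S0i :: "(nat \<Rightarrow> int) \<times> (nat \<Rightarrow> int) \<Rightarrow> (nat \<Rightarrow> int) \<times> (nat \<Rightarrow> int)" where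
  "S0i p = (case p of (c,d) \<Rightarrow> ((\<lambda>i. (t*d i + s*r'*c i) mod n), (\<lambda>i. (r'*c i) mod n)))"
definition Bi :: "(nat \<Rightarrow> int) \<times> (nat \<Rightarrow> int) \<Rightarrow> (nat \<Rightarrow> int) \<times> (nat \<Rightarrow> int)" where
  "Bi p = (case p of (u,v) \<Rightarrow> ((\<lambda>i. (r'*v i) mod n), (\<lambda>i. (t'*(u i - s*r'*v i)) mod n)))"
definition scal :: "int \<Rightarrow> (nat \<Rightarrow> int) \<Rightarrow> (nat \<Rightarrow> int)" where
  "scal c x = (\<lambda>i. (c * x i) mod n)"

lemma npos: "n > 0" using n2 by simp

lemma memX: "x \<in> X \<Longrightarrow> x i mod n = x i"
  unfolding zn_vecs_def by (cases "i < m") auto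

lemma zeroX: "x \<in> X \<Longrightarrow> m \<le> i \<Longrightarrow> x i = 0"
  unfolding zn_vecs_def by auto

lemma closX: "(\<And>i. m \<le> i \<Longrightarrow> f i mod n = 0) \<Longrightarrow> (\<lambda>i. f i mod n) \<in> X"
  unfolding zn_vecs_def using npos by auto

lemma key: assumes "A - B = ca*(t*t'-1) + cb*(r*r'-1) + cc*(s^2-(1-t*r)*s)"
  shows "A mod n = B mod n"
proof -
  have "n dvd t*t'-1" using tt by (simp add: cong_def mod_eq_dvd_iff)
  moreover have "n dvd r*r'-1" using rr by (simp add: cong_def mod_eq_dvd_iff)
  moreover have "n dvd s^2-(1-t*r)*s" using sc by (simp add: cong_def mod_eq_dvd_iff)
  ultimately have "n dvd A - B" unfolding assms by (simp add: dvd_add dvd_mult)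
  thus ?thesis by (simp add: mod_eq_dvd_iff)
qed

lemma keyX: assumes "x \<in> X" "A - x i = ca*(t*t'-1) + cb*(r*r'-1) + cc*(s^2-(1-t*r)*s)"
  shows "A mod n = x i"
  using key[OF assms(2)] memX[OF assms(1)] by simp

lemma scal_X: "x \<in> X \<Longrightarrow> scal c x \<in> X"
  unfolding scal_def by (rule closX) (simp add: zeroX)

lemma scal_comp: "scal c (scal d x) = scal (c*d) x"
  unfolding scal_def by (simp add: msimps mult.assoc)

lemma scal_cong: "[c = d] (mod n) \<Longrightarrow> scal c x = scal d x"
  unfolding scal_def cong_def by (metis mod_mult_left_eq)

lemma scal_one: "x \<in> X \<Longrightarrow> scal 1 x = x"
  unfolding scal_def using memX by auto

lemma scal_inv: "[c*d = 1] (mod n) \<Longrightarrow> x \<in> X \<Longrightarrow> scal c (scal d x) = x"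
  using scal_comp scal_cong scal_one by metis

lemma scal_bij: assumes "[c*d = 1] (mod n)" shows "bij_betw (scal c) X X"
proof (rule bij_betw_byWitness[where f'="scal d"])
  have "[d*c = 1] (mod n)" using assms by (simp add: mult.commute)
  then show "\<forall>a\<in>X. scal d (scal c a) = a" using scal_inv by blast
  show "\<forall>a\<in>X. scal c (scal d a) = a" using scal_inv assms by blast
  show "scal c ` X \<subseteq> X" using scal_X by blast
  show "scal d ` X \<subseteq> X" using scal_X by blast
qed

lemma B_X: "p \<in> X \<times> X \<Longrightarrow> BB p \<in> X \<times> X"
  unfolding alex_B_def by (cases p) (auto intro!: closX simp: zeroX)

lemma Bi_X: "p \<in> X \<times> X \<Longrightarrow> Bi p \<in> X \<times> X"
  unfolding Bi_def by (cases p) (auto intro!: closX simp: zeroX)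

lemma S0_X: "p \<in> X \<times> X \<Longrightarrow> S0 p \<in> X \<times> X"
  unfolding S0_def by (cases p) (auto intro!: closX simp: zeroX)

lemma S0i_X: "p \<in> X \<times> X \<Longrightarrow> S0i p \<in> X \<times> X"
  unfolding S0i_def by (cases p) (auto intro!: closX simp: zeroX)

lemma B_bij: "bij_betw BB (X \<times> X) (X \<times> X)"
proof (rule bij_betw_byWitness[where f'=Bi])
  show "\<forall>a\<in>X \<times> X. Bi (BB a) = a"
  proof
    fix p assume "p \<in> X \<times> X"
    then obtain x y where p: "p = (x,y)" "x \<in> X" "y \<in> X" by auto
    have 1: "(\<lambda>i. r' * (r * x i mod n) mod n) = x"
    proof
      fix i show "r' * (r * x i mod n) mod n = x i"
        apply (simp add: msimps)
        by (rule keyX[OF p(2), where ca=0 and cb="x i" and cc=0]) (simp add: algebra_simps)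
    qed
    have 2: "(\<lambda>i. t' * ((t * y i + s * x i) mod n - s * r' * (r * x i mod n)) mod n) = y"
    proof
      fix i show "t' * ((t * y i + s * x i) mod n - s * r' * (r * x i mod n)) mod n = y i"
        apply (simp add: msimps)
        by (rule keyX[OF p(3), where ca="y i" and cb="-t'*s*x i" and cc=0]) (simp add: algebra_simps)
    qed
    show "Bi (BB p) = p" using 1 2 p unfolding Bi_def alex_B_def by simp
  qed
  show "\<forall>a\<in>X \<times> X. BB (Bi a) = a"
  proof
    fix p assume "p \<in> X \<times> X"
    then obtain x y where p: "p = (x,y)" "x \<in> X" "y \<in> X" by auto
    have 1: "(\<lambda>i. (t * (t' * (x i - s * r' * y i) mod n) + s * (r' * y i mod n)) mod n) = x"
    proof
      fix i show "(t * (t' * (x i - s * r' * y i) mod n) + s * (r' * y i mod n)) mod n = x i"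
        apply (simp add: msimps)
        by (rule keyX[OF p(2), where ca="x i - s * r' * y i" and cb=0 and cc=0]) (simp add: algebra_simps)
    qed
    have 2: "(\<lambda>i. r * (r' * y i mod n) mod n) = y"
    proof
      fix i show "r * (r' * y i mod n) mod n = y i"
        apply (simp add: msimps)
        by (rule keyX[OF p(3), where ca=0 and cb="y i" and cc=0]) (simp add: algebra_simps)
    qed
    show "BB (Bi p) = p" using 1 2 p unfolding Bi_def alex_B_def by simp
  qed
  show "BB ` (X \<times> X) \<subseteq> X \<times> X" using B_X by blast
  show "Bi ` (X \<times> X) \<subseteq> X \<times> X" using Bi_X by blast
qed

lemma S0_inv1: assumes "p \<in> X \<times> X" shows "S0i (S0 p) = p"
proof -
  obtain a b where p: "p = (a,b)" "a \<in> X" "b \<in> X" using assms by auto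
  have 1: "(\<lambda>i. (t * (t' * (a i - s * b i) mod n) + s * r' * (r * b i mod n)) mod n) = a"
  proof
    fix i show "(t * (t' * (a i - s * b i) mod n) + s * r' * (r * b i mod n)) mod n = a i"
      apply (simp add: msimps)
      by (rule keyX[OF p(2), where ca="a i - s * b i" and cb="s * b i" and cc=0]) (simp add: algebra_simps)
  qed
  have 2: "(\<lambda>i. r' * (r * b i mod n) mod n) = b"
  proof
    fix i show "r' * (r * b i mod n) mod n = b i"
      apply (simp add: msimps)
      by (rule keyX[OF p(3), where ca=0 and cb="b i" and cc=0]) (simp add: algebra_simps)
  qed
  show ?thesis using 1 2 p unfolding S0_def S0i_def by simp
qed

lemma S0_inv2: assumes "p \<in> X \<times> X" shows "S0 (S0i p) = p"
proof -
  obtain c d where p: "p = (c,d)" "c \<in> X" "d \<in> X" using assms by auto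
  have 1: "(\<lambda>i. r * (r' * c i mod n) mod n) = c"
  proof
    fix i show "r * (r' * c i mod n) mod n = c i"
      apply (simp add: msimps)
      by (rule keyX[OF p(2), where ca=0 and cb="c i" and cc=0]) (simp add: algebra_simps)
  qed
  have 2: "(\<lambda>i. t' * ((t * d i + s * r' * c i) mod n - s * (r' * c i mod n)) mod n) = d"
  proof
    fix i show "t' * ((t * d i + s * r' * c i) mod n - s * (r' * c i mod n)) mod n = d i"
      apply (simp add: msimps)
      by (rule keyX[OF p(3), where ca="d i" and cb=0 and cc=0]) (simp add: algebra_simps)
  qed
  show ?thesis using 1 2 p unfolding S0_def S0i_def by simp
qed

lemma S0_bij: "bij_betw S0 (X \<times> X) (X \<times> X)"
  by (rule bij_betw_byWitness[where f'=S0i]) (use S0_inv1 S0_inv2 S0_X S0i_X in blast)+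

lemma S0_side: "is_sideways X BB S0"
  unfolding is_sideways_def
proof (intro conjI S0_bij ballI)
  fix x y assume x: "x \<in> X" and y: "y \<in> X"
  have 2: "(\<lambda>i. t' * ((t * y i + s * x i) mod n - s * x i) mod n) = y"
  proof
    fix i show "t' * ((t * y i + s * x i) mod n - s * x i) mod n = y i"
      apply (simp add: msimps)
      by (rule keyX[OF y, where ca="y i" and cb=0 and cc=0]) (simp add: algebra_simps)
  qed
  show "S0 (fst (BB (x, y)), x) = (snd (BB (x, y)), y)"
    using 2 unfolding S0_def alex_B_def by simp
qed

lemma S0_uniq: assumes "is_sideways X BB S'" "p \<in> X \<times> X" shows "S' p = S0 p"
proof -
  obtain a b where p: "p = (a,b)" "a \<in> X" "b \<in> X" using assms(2) by auto
  define y where "y = snd (S0 p)"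
  have y: "y \<in> X" using S0_X[OF assms(2)] unfolding y_def by auto
  have 1: "(\<lambda>i. (t * y i + s * b i) mod n) = a"
  proof
    fix i show "(t * y i + s * b i) mod n = a i"
      unfolding y_def p(1) S0_def apply (simp add: msimps)
      by (rule keyX[OF p(2), where ca="a i - s * b i" and cb=0 and cc=0]) (simp add: algebra_simps)
  qed
  have "fst (BB (b, y)) = a" using 1 unfolding alex_B_def by simp
  moreover have "snd (BB (b, y)) = fst (S0 p)" unfolding alex_B_def S0_def p(1) by simp
  moreover have "S' (fst (BB (b,y)), b) = (snd (BB (b,y)), y)"
    using assms(1) p(3) y unfolding is_sideways_def by blast
  ultimately have "S' (a, b) = (fst (S0 p), y)" by simp
  thus ?thesis using p(1) y_def by simp
qed

lemma SM: assumes "p \<in> X \<times> X" shows "sideways_map X BB p = S0 p"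
proof -
  have "is_sideways X BB (sideways_map X BB)"
    unfolding sideways_map_def by (rule someI[of _ S0]) (rule S0_side)
  thus ?thesis using S0_uniq assms by blast
qed

lemma SI: assumes "p \<in> X \<times> X" shows "sideways_inv X BB p = S0i p"
proof -
  have "inj_on S0 (X \<times> X)" using S0_bij by (rule bij_betw_imp_inj_on)
  hence inj: "inj_on (sideways_map X BB) (X \<times> X)"
    using inj_on_cong[of "X \<times> X" "sideways_map X BB" S0] SM by blast
  have q: "S0i p \<in> X \<times> X" using S0i_X assms by blast
  show ?thesis unfolding sideways_inv_def
    by (rule the_inv_into_f_eq[OF inj]) (use SM[OF q] S0_inv2[OF assms] q in auto)
qed

lemma u1: "[t'*(1-s)*(t+s*r') = 1] (mod n)"
  unfolding cong_def
  by (rule key[where ca=1 and cb="t*t'*s" and cc="-(t'*r')"]) (simp add: algebra_simps power2_eq_square)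
lemma u2: "[(t+s*r')*(t'*(1-s)) = 1] (mod n)"
  using u1 by (simp add: mult.commute)
lemma u3: "[r'*r = 1] (mod n)"
  using rr by (simp add: mult.commute)
lemma u4: "[(t+s*r')*r = t*r+s] (mod n)"
  unfolding cong_def
  by (rule key[where ca=0 and cb="s" and cc=0]) (simp add: algebra_simps)

lemma D1: "x \<in> X \<Longrightarrow> fst (sideways_map X BB (x,x)) = scal r x"
  by (simp add: SM S0_def scal_def)
lemma D2: "x \<in> X \<Longrightarrow> snd (sideways_map X BB (x,x)) = scal (t'*(1-s)) x"
  by (simp add: SM S0_def scal_def algebra_simps)
lemma D3: "x \<in> X \<Longrightarrow> fst (sideways_inv X BB (x,x)) = scal (t+s*r') x"
  by (simp add: SI S0i_def scal_def algebra_simps)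
lemma D4: "x \<in> X \<Longrightarrow> snd (sideways_inv X BB (x,x)) = scal r' x"
  by (simp add: SI S0i_def scal_def)

lemma strong: "strongly_invertible X BB"
  unfolding strongly_invertible_def
proof (intro conjI)
  show "bij_betw BB (X \<times> X) (X \<times> X)" by (rule B_bij)
  show "\<exists>S. is_sideways X BB S \<and> (\<forall>S'. is_sideways X BB S' \<longrightarrow> (\<forall>p\<in>X \<times> X. S' p = S p))"
    using S0_side S0_uniq by blast
  show "bij_betw (\<lambda>x. fst (sideways_map X BB (x, x))) X X"
    using bij_betw_cong[of X "\<lambda>x. fst (sideways_map X BB (x, x))" "scal r"] D1 scal_bij[OF rr] by simp
  show "bij_betw (\<lambda>x. snd (sideways_map X BB (x, x))) X X"
    using bij_betw_cong[of X "\<lambda>x. snd (sideways_map X BB (x, x))" "scal (t'*(1-s))"] D2 scal_bij[OF u1] by simp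
  show "bij_betw (\<lambda>x. fst (sideways_inv X BB (x, x))) X X"
    using bij_betw_cong[of X "\<lambda>x. fst (sideways_inv X BB (x, x))" "scal (t+s*r')"] D3 scal_bij[OF u2] by simp
  show "bij_betw (\<lambda>x. snd (sideways_inv X BB (x, x))) X X"
    using bij_betw_cong[of X "\<lambda>x. snd (sideways_inv X BB (x, x))" "scal r'"] D4 scal_bij[OF u3] by simp
qed

lemma ybe: "p \<in> X \<times> X \<times> X \<Longrightarrow> B_Id BB (Id_B BB (B_Id BB p)) = Id_B BB (B_Id BB (Id_B BB p))"
  apply (cases p)
  apply (simp add: B_Id_def Id_B_def alex_B_def)
  apply (intro conjI ext)
  apply (simp_all add: msimps)
  subgoal for a b c i
    by (rule key[where ca=0 and cb=0 and cc="a i"]) (simp add: algebra_simps power2_eq_square)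
  apply (simp add: algebra_simps)
  done

lemma kink: assumes x: "x \<in> X" shows "kink_map X BB x = scal (t*r+s) x"
proof -
  have "bij_betw (\<lambda>z. snd (sideways_inv X BB (z, z))) X X"
    using bij_betw_cong[of X "\<lambda>z. snd (sideways_inv X BB (z, z))" "scal r'"] D4 scal_bij[OF u3] by simp
  hence inj: "inj_on (\<lambda>z. snd (sideways_inv X BB (z, z))) X" by (rule bij_betw_imp_inj_on)
  have rx: "scal r x \<in> X" using scal_X x by blast
  have "the_inv_into X (\<lambda>z. snd (sideways_inv X BB (z, z))) x = scal r x"
    by (rule the_inv_into_f_eq[OF inj]) (use D4[OF rx] scal_inv[OF u3 x] rx in auto)
  hence "kink_map X BB x = scal (t+s*r') (scal r x)"
    unfolding kink_map_def using D3[OF rx] by simp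
  also have "\<dots> = scal (t*r+s) x" using scal_comp scal_cong[OF u4] by simp
  finally show ?thesis .
qed

lemma kinkpow: "x \<in> X \<Longrightarrow> (kink_map X BB ^^ N) x = scal ((t*r+s)^N) x"
proof (induction N)
  case 0 thus ?case using scal_one by simp
next
  case (Suc N)
  have "(kink_map X BB ^^ Suc N) x = kink_map X BB (scal ((t*r+s)^N) x)" using Suc by simp
  also have "\<dots> = scal (t*r+s) (scal ((t*r+s)^N) x)" using kink scal_X Suc.prems by blast
  also have "\<dots> = scal ((t*r+s)^Suc N) x" by (simp add: scal_comp)
  finally show ?case .
qed

lemma fix_iff: "(\<forall>x\<in>X. scal c x = x) \<longleftrightarrow> [c = 1] (mod n)"
proof
  assume "[c = 1] (mod n)"
  thus "\<forall>x\<in>X. scal c x = x" using scal_cong scal_one by metis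
next
  assume h: "\<forall>x\<in>X. scal c x = x"
  define e where "e = (\<lambda>i::nat. if i = 0 then (1::int) else 0)"
  have "e \<in> X" unfolding e_def zn_vecs_def using n2 m1 by auto
  hence "scal c e 0 = e 0" using h by simp
  hence "c mod n = 1" unfolding scal_def e_def by simp
  moreover have "1 mod n = 1" using n2 by simp
  ultimately show "[c = 1] (mod n)" unfolding cong_def by simp
qed

lemma rank: "birack_rank X BB = (LEAST N::nat. 0 < N \<and> [(t * r + s) ^ N = 1] (mod n))"
proof -
  have "\<And>N. (\<forall>x\<in>X. (kink_map X BB ^^ N) x = x) \<longleftrightarrow> [(t * r + s) ^ N = 1] (mod n)"
    using kinkpow fix_iff by simp
  thus ?thesis unfolding birack_rank_def by simp
qed

lemma birack_ok: "birack X BB"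
  unfolding birack_def using strong ybe by blast

end

theorem mainTheorem5:
  fixes n t s r :: int and m :: nat
  assumes "n \<ge> 2" and "m \<ge> 1"
    and "t \<in> {0..<n}" and "s \<in> {0..<n}" and "r \<in> {0..<n}"
    and "coprime t n" and "coprime r n"
    and "[s ^ 2 = (1 - t * r) * s] (mod n)"
  shows "birack (zn_vecs n m) (alex_B n t s r) \<and>
         birack_rank (zn_vecs n m) (alex_B n t s r) =
           (LEAST N::nat. 0 < N \<and> [(t * r + s) ^ N = 1] (mod n))"
proof -
  obtain t' where t': "[t * t' = 1] (mod n)" using cong_solve_coprime_int assms(6) by blast
  obtain r' where r': "[r * r' = 1] (mod n)" using cong_solve_coprime_int assms(7) by blast
  interpret alex n t s r t' r' m
    using assms t' r' by unfold_locales auto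
  show ?thesis using birack_ok rank by blast
qed

end
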